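(* Let $m=pq$ with $p,q$ distinct primes. For each $n\ge2$ and each $i$ with $2\le i\le n$ there exists an edge-labeling $\alpha$ of the complete graph $K_n$ by ideals of $\mathbb{Z}/m\mathbb{Z}$ such that $\operatorname{rk}[\mathbb{Z}/m\mathbb{Z}]_{(K_n,\alpha)}=i$.
   Context: An edge-labeling assigns to each edge of a graph a nonzero proper ideal of $\mathbb{Z}/m\mathbb{Z}$. A spline on an edge-labeled graph $(G,\alpha)$ with vertices $v_1,\dots,v_n$ is a vector $(f_{v_1},\dots,f_{v_n})\in(\mathbb{Z}/m\mathbb{Z})^n$ with $f_{v_i}-f_{v_j}\in\alpha(v_iv_j)$ for every edge; the splines form a $\mathbb{Z}$-module $[\mathbb{Z}/m\mathbb{Z}]_{(G,\alpha)}$, whose rank $\operatorname{rk}$ is the smallest size of a generating set. *)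

theory Defs
  imports "HOL-Computational_Algebra.Primes"
begin

text \<open>Z/mZ is represented by the integers {0..<m}; arithmetic is taken mod m.\<close>

definition zmod_ideal :: "int \<Rightarrow> int set \<Rightarrow> bool" where
  "zmod_ideal m I \<longleftrightarrow> I \<subseteq> {0..<m} \<and> 0 \<in> I \<and>
     (\<forall>x\<in>I. \<forall>y\<in>I. (x + y) mod m \<in> I) \<and>
     (\<forall>r::int. \<forall>x\<in>I. (r * x) mod m \<in> I)"

definition nonzero_proper_ideal :: "int \<Rightarrow> int set \<Rightarrow> bool" where
  "nonzero_proper_ideal m I \<longleftrightarrow> zmod_ideal m I \<and> I \<noteq> {0} \<and> I \<noteq> {0..<m}"

definition edge_labeling_Kn :: "int \<Rightarrow> nat \<Rightarrow> (nat \<Rightarrow> nat \<Rightarrow> int set) \<Rightarrow> bool" where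
  "edge_labeling_Kn m n \<alpha> \<longleftrightarrow>
     (\<forall>i<n. \<forall>j<n. i \<noteq> j \<longrightarrow> \<alpha> i j = \<alpha> j i \<and> nonzero_proper_ideal m (\<alpha> i j))"

definition splines_Kn :: "int \<Rightarrow> nat \<Rightarrow> (nat \<Rightarrow> nat \<Rightarrow> int set) \<Rightarrow> (nat \<Rightarrow> int) set" where
  "splines_Kn m n \<alpha> = {f. (\<forall>v<n. f v \<in> {0..<m}) \<and> (\<forall>v. n \<le> v \<longrightarrow> f v = 0) \<and>
      (\<forall>i<n. \<forall>j<n. i \<noteq> j \<longrightarrow> (f i - f j) mod m \<in> \<alpha> i j)}"

definition zspan :: "int \<Rightarrow> nat \<Rightarrow> (nat \<Rightarrow> int) list \<Rightarrow> (nat \<Rightarrow> int) set" where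
  "zspan m n gs = {(\<lambda>v. if v < n then (\<Sum>k<length gs. c k * (gs ! k) v) mod m else 0) | c. True}"

definition spline_rank :: "int \<Rightarrow> nat \<Rightarrow> (nat \<Rightarrow> nat \<Rightarrow> int set) \<Rightarrow> nat" where
  "spline_rank m n \<alpha> = (LEAST k. \<exists>gs. length gs = k \<and> set gs \<subseteq> splines_Kn m n \<alpha> \<and>
       zspan m n gs = splines_Kn m n \<alpha>)"

end

theory Submission
  imports Defs "HOL-Library.FuncSet"
begin

lemma dvd_mod_diff:
  fixes a b d m :: int
  assumes "d dvd m" "d dvd a - b"
  shows "d dvd (a mod m - b mod m)"
proof -
  have "a mod m - b mod m = (a - b) - m * (a div m - b div m)"
    by (simp add: algebra_simps minus_div_mult_eq_mod[symmetric])
  then show ?thesis using assms by (simp add: dvd_diff)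
qed

lemma mem_dvd_ideal:
  fixes d m x :: int
  assumes "d dvd m" "0 < m"
  shows "(x mod m \<in> {y\<in>{0..<m}. d dvd y}) \<longleftrightarrow> d dvd x"
  using assms by (simp add: dvd_mod_iff)

lemma dvd_ideal:
  fixes d m :: int
  assumes "d dvd m" "1 < d" "d < m"
  shows "nonzero_proper_ideal m {y\<in>{0..<m}. d dvd y}"
proof -
  have m0: "0 < m" using assms by simp
  have z: "zmod_ideal m {y\<in>{0..<m}. d dvd y}"
    unfolding zmod_ideal_def using assms m0 by (auto simp: dvd_mod_iff)
  have dI: "d \<in> {y\<in>{0..<m}. d dvd y}" using assms by auto
  have oI: "1 \<notin> {y\<in>{0..<m}. d dvd y}" using assms by auto
  have oM: "(1::int) \<in> {0..<m}" using assms by auto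
  have n1: "{y\<in>{0..<m}. d dvd y} \<noteq> {0}"
  proof
    assume "{y\<in>{0..<m}. d dvd y} = {0}"
    then have "d = 0" using dI by blast
    then show False using assms by simp
  qed
  have n2: "{y\<in>{0..<m}. d dvd y} \<noteq> {0..<m}" using oI oM by blast
  show ?thesis unfolding nonzero_proper_ideal_def using z n1 n2 by blast
qed

lemma small_dvd_eq:
  fixes x y p :: int
  assumes "0 \<le> x" "x < p" "0 \<le> y" "y < p" "p dvd x - y"
  shows "x = y"
proof -
  have "x mod p = y mod p" using assms(5) by (simp add: mod_eq_dvd_iff)
  then show ?thesis using assms by simp
qed

locale cfg =
  fixes p q m :: int and n i :: nat
  assumes pp: "prime p" and qp: "prime q" and pq: "p \<noteq> q" and mdef: "m = p * q"
    and n2: "2 \<le> n" and i2: "2 \<le> i" and iN: "i \<le> n"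
begin

definition kk :: nat where "kk = n - i + 1"
definition cls :: "nat \<Rightarrow> nat" where "cls v = (if v < kk then 0 else v - kk + 1)"
definition rep :: "nat \<Rightarrow> nat" where "rep s = (if s = 0 then 0 else kk + s - 1)"
definition Ip :: "int set" where "Ip = {y\<in>{0..<m}. p dvd y}"
definition Iq :: "int set" where "Iq = {y\<in>{0..<m}. q dvd y}"
definition al :: "nat \<Rightarrow> nat \<Rightarrow> int set" where "al a b = (if cls a = cls b then Ip else Iq)"

lemma p1: "1 < p" by (rule prime_gt_1_int[OF pp])
lemma q1: "1 < q" by (rule prime_gt_1_int[OF qp])
lemma pm: "p < m" using p1 q1 mdef by (simp add: mult_less_cancel_left1) 
lemma qm: "q < m" using p1 q1 mdef by (simp add: mult_less_cancel_right1)
lemma m0: "0 < m" using qm q1 by simp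
lemma pdm: "p dvd m" using mdef by simp
lemma qdm: "q dvd m" using mdef by simp
lemma cop: "coprime p q" using primes_coprime pp qp pq by blast

lemma kk1: "1 \<le> kk" "kk < n" using i2 iN unfolding kk_def by auto

lemma cls_lt: "v < n \<Longrightarrow> cls v < i" using i2 iN unfolding cls_def kk_def by auto
lemma cls_last: "cls (n - 1) = i - 1" using i2 iN unfolding cls_def kk_def by auto
lemma cls_last_iff: "v < n \<Longrightarrow> cls v = i - 1 \<longleftrightarrow> v = n - 1"
  using i2 iN unfolding cls_def kk_def by auto
lemma rep_ok: "s < i \<Longrightarrow> rep s < n \<and> cls (rep s) = s"
  using i2 iN unfolding cls_def kk_def rep_def by auto
lemma cls_eq: "cls a = cls b \<Longrightarrow> a \<noteq> b \<Longrightarrow> a < kk \<and> b < kk"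
  unfolding cls_def by (auto split: if_splits)

lemma labeling: "edge_labeling_Kn m n al"
  unfolding edge_labeling_Kn_def al_def Ip_def Iq_def
  using dvd_ideal[OF pdm p1 pm] dvd_ideal[OF qdm q1 qm] by auto

lemma spl_iff: "f \<in> splines_Kn m n al \<longleftrightarrow> (\<forall>v<n. f v \<in> {0..<m}) \<and> (\<forall>v. n \<le> v \<longrightarrow> f v = 0) \<and>
   (\<forall>a<n. \<forall>b<n. q dvd f a - f b) \<and> (\<forall>a<n. \<forall>b<n. cls a = cls b \<longrightarrow> p dvd f a - f b)"
proof
  assume f: "f \<in> splines_Kn m n al"
  have e: "\<And>a b. a < n \<Longrightarrow> b < n \<Longrightarrow> a \<noteq> b \<Longrightarrow> (f a - f b) mod m \<in> al a b"
    using f unfolding splines_Kn_def by auto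
  have P: "\<forall>a<n. \<forall>b<n. cls a = cls b \<longrightarrow> p dvd f a - f b"
  proof (intro allI impI)
    fix a b assume "a < n" "b < n" "cls a = cls b"
    then show "p dvd f a - f b"
      using e[of a b] mem_dvd_ideal[OF pdm m0] unfolding al_def Ip_def
      by (cases "a = b") auto
  qed
  have Q1: "q dvd f a - f (n - 1)" if "a < n" for a
  proof (cases "a = n - 1")
    case False
    then have "cls a \<noteq> cls (n - 1)" using cls_last_iff[OF that] cls_last by auto
    then show ?thesis using e[of a "n - 1"] False that mem_dvd_ideal[OF qdm m0] kk1
      unfolding al_def Iq_def by auto
  qed simp
  have Q: "\<forall>a<n. \<forall>b<n. q dvd f a - f b"
  proof (intro allI impI)
    fix a b assume "a < n" "b < n"
    then have "q dvd (f a - f (n - 1)) - (f b - f (n - 1))" using Q1 dvd_diff by blast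
    then show "q dvd f a - f b" by simp
  qed
  show "(\<forall>v<n. f v \<in> {0..<m}) \<and> (\<forall>v. n \<le> v \<longrightarrow> f v = 0) \<and>
   (\<forall>a<n. \<forall>b<n. q dvd f a - f b) \<and> (\<forall>a<n. \<forall>b<n. cls a = cls b \<longrightarrow> p dvd f a - f b)"
    using f P Q unfolding splines_Kn_def by auto
next
  assume "(\<forall>v<n. f v \<in> {0..<m}) \<and> (\<forall>v. n \<le> v \<longrightarrow> f v = 0) \<and>
   (\<forall>a<n. \<forall>b<n. q dvd f a - f b) \<and> (\<forall>a<n. \<forall>b<n. cls a = cls b \<longrightarrow> p dvd f a - f b)"
  then show "f \<in> splines_Kn m n al"
    unfolding splines_Kn_def al_def Ip_def Iq_def
    using mem_dvd_ideal[OF pdm m0] mem_dvd_ideal[OF qdm m0] by auto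
qed

definition G :: "nat \<Rightarrow> nat \<Rightarrow> int" where
  "G t = (\<lambda>v. if v < n then (if t = 0 then 1 else if cls v = t - 1 then q else 0) else 0)"
definition gs0 :: "(nat \<Rightarrow> int) list" where "gs0 = map G [0..<i]"

lemma G_spl: "G t \<in> splines_Kn m n al"
  unfolding spl_iff G_def using q1 qm by auto

lemma gs0_spl: "set gs0 \<subseteq> splines_Kn m n al"
  unfolding gs0_def using G_spl by auto

lemma zspan_sub:
  assumes "set gs \<subseteq> splines_Kn m n al"
  shows "zspan m n gs \<subseteq> splines_Kn m n al"
proof
  fix x assume "x \<in> zspan m n gs"
  then obtain c where x: "x = (\<lambda>v. if v < n then (\<Sum>k<length gs. c k * (gs ! k) v) mod m else 0)"
    unfolding zspan_def by auto
  have g: "\<And>k. k < length gs \<Longrightarrow> gs ! k \<in> splines_Kn m n al" using assms nth_mem by blast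
  have D: "(\<Sum>k<length gs. c k * (gs ! k) a) - (\<Sum>k<length gs. c k * (gs ! k) b)
      = (\<Sum>k<length gs. c k * ((gs ! k) a - (gs ! k) b))" for a b
    by (simp add: sum_subtractf[symmetric] algebra_simps)
  have Q: "q dvd x a - x b" if "a < n" "b < n" for a b
  proof -
    have "q dvd (\<Sum>k<length gs. c k * ((gs ! k) a - (gs ! k) b))"
      using g that by (intro dvd_sum) (auto simp: spl_iff)
    then show ?thesis using x that D dvd_mod_diff[OF qdm] by simp
  qed
  have P: "p dvd x a - x b" if "a < n" "b < n" "cls a = cls b" for a b
  proof -
    have "p dvd (\<Sum>k<length gs. c k * ((gs ! k) a - (gs ! k) b))"
      using g that by (intro dvd_sum) (auto simp: spl_iff)
    then show ?thesis using x that D dvd_mod_diff[OF pdm] by simp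
  qed
  show "x \<in> splines_Kn m n al" unfolding spl_iff using P Q x m0 by auto
qed

lemma sum_G:
  assumes "v < n"
  shows "(\<Sum>t<i. c t * G t v) = c 0 + (if cls v + 1 < i then c (cls v + 1) * q else 0)"
proof -
  have "(\<Sum>t<i. c t * G t v) = (\<Sum>t<i. (if t = 0 then c 0 else 0) + (if t = cls v + 1 then c t * q else 0))"
    using assms by (intro sum.cong) (auto simp: G_def)
  also have "\<dots> = c 0 + (if cls v + 1 < i then c (cls v + 1) * q else 0)"
    using i2 by (simp add: sum.distrib)
  finally show ?thesis .
qed

lemma sub_zspan: "splines_Kn m n al \<subseteq> zspan m n gs0"
proof
  fix f assume f: "f \<in> splines_Kn m n al"
  then have F: "(\<forall>v<n. f v \<in> {0..<m}) \<and> (\<forall>v. n \<le> v \<longrightarrow> f v = 0) \<and>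
   (\<forall>a<n. \<forall>b<n. q dvd f a - f b) \<and> (\<forall>a<n. \<forall>b<n. cls a = cls b \<longrightarrow> p dvd f a - f b)"
    using spl_iff by blast
  define c where "c t = (if t = 0 then f (n - 1) else (f (rep (t - 1)) - f (n - 1)) div q)" for t
  have "f v = (if v < n then (\<Sum>k<length gs0. c k * (gs0 ! k) v) mod m else 0)" for v
  proof (cases "v < n")
    case True
    have s: "(\<Sum>k<length gs0. c k * (gs0 ! k) v) = (\<Sum>t<i. c t * G t v)"
      unfolding gs0_def by (intro sum.cong) auto
    show ?thesis
    proof (cases "cls v + 1 < i")
      case True2: True
      have r: "rep (cls v) < n" "cls (rep (cls v)) = cls v" using rep_ok True2 by auto
      have dq: "q dvd f (rep (cls v)) - f (n - 1)" using F r kk1 by auto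
      have e: "c 0 + c (cls v + 1) * q = f (rep (cls v))"
        using dq unfolding c_def by simp
      have "p dvd f v - f (rep (cls v))" "q dvd f v - f (rep (cls v))" using F r True by auto
      then have "m dvd f v - f (rep (cls v))" using divides_mult cop mdef by metis
      then have "f v mod m = f (rep (cls v)) mod m" using mod_eq_dvd_iff by blast
      then have m1: "f (rep (cls v)) mod m = f v mod m" by (rule sym)
      have m2: "f v mod m = f v" using F True by auto
      have sm: "(\<Sum>k<length gs0. c k * (gs0 ! k) v) = f (rep (cls v))"
        using s sum_G[OF True, of c] True2 e by simp
      show ?thesis using True sm m1 m2 by simp
    next
      case False
      then have "v = n - 1" using cls_lt[OF True] cls_last_iff[OF True] by auto
      then show ?thesis using True False s sum_G[OF True, of c] F unfolding c_def by auto
    qed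
  next
    case False then show ?thesis using F by auto
  qed
  then show "f \<in> zspan m n gs0" unfolding zspan_def by blast
qed

lemma upper: "length gs0 = i \<and> set gs0 \<subseteq> splines_Kn m n al \<and> zspan m n gs0 = splines_Kn m n al"
  using gs0_spl zspan_sub[OF gs0_spl] sub_zspan unfolding gs0_def by auto

definition Fu :: "(nat \<Rightarrow> int) \<Rightarrow> nat \<Rightarrow> int" where
  "Fu u = (\<lambda>v. if v < n then (q * u (cls v)) mod m else 0)"
definition pr :: "(nat \<Rightarrow> int) \<Rightarrow> nat \<Rightarrow> int" where
  "pr f = (\<lambda>v. if v < n then f v mod p else 0)"

lemma Fu_spl: "Fu u \<in> splines_Kn m n al"
  unfolding spl_iff Fu_def using m0 dvd_mod_diff[OF qdm] by (auto simp: right_diff_distrib[symmetric])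

lemma inj_pr: "inj_on (pr \<circ> Fu) (PiE {..<i} (\<lambda>_. {0..<p}))"
proof (rule inj_onI)
  fix u u' assume u: "u \<in> PiE {..<i} (\<lambda>_. {0..<p})" and u': "u' \<in> PiE {..<i} (\<lambda>_. {0..<p})"
    and e: "(pr \<circ> Fu) u = (pr \<circ> Fu) u'"
  show "u = u'"
  proof (rule PiE_ext[OF u u'])
    fix s assume "s \<in> {..<i}"
    then have r: "rep s < n" "cls (rep s) = s" using rep_ok by auto
    have "(pr \<circ> Fu) u (rep s) = (pr \<circ> Fu) u' (rep s)" using e by simp
    then have "(q * u s) mod p = (q * u' s) mod p"
      using r by (simp add: pr_def Fu_def mod_mod_cancel[OF pdm])
    then have "p dvd q * (u s - u' s)" by (simp add: mod_eq_dvd_iff right_diff_distrib)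
    then have o: "p dvd q \<or> p dvd (u s - u' s)" by (rule prime_dvd_multD[OF pp])
    have "\<not> p dvd q" using cop p1
      by (metis coprime_absorb_right not_prime_unit pp primes_dvd_imp_eq qp pq)
    with o have d: "p dvd u s - u' s" by blast
    have a1: "u s \<in> {0..<p}" using u \<open>s \<in> {..<i}\<close> by (simp add: PiE_iff)
    have a2: "u' s \<in> {0..<p}" using u' \<open>s \<in> {..<i}\<close> by (simp add: PiE_iff)
    show "u s = u' s" using a1 a2 d by (intro small_dvd_eq[of "u s" p "u' s"]) auto
  qed
qed

lemma lower:
  assumes "length gs = j" "zspan m n gs = splines_Kn m n al"
  shows "i \<le> j"
proof -
  define A where "A = PiE {..<i} (\<lambda>_::nat. {0..<p})"
  define B where "B = PiE {..<j} (\<lambda>_::nat. {0..<p})"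
  define H where "H c = (\<lambda>v. if v < n then (\<Sum>k<j. c k * (gs ! k) v) mod p else 0)" for c
  have cA: "card A = nat p ^ i" unfolding A_def by (simp add: card_PiE)
  have cB: "card B = nat p ^ j" unfolding B_def by (simp add: card_PiE)
  have fB: "finite B" unfolding B_def by (simp add: finite_PiE)
  have sub: "(pr \<circ> Fu) ` A \<subseteq> H ` B"
  proof
    fix y assume "y \<in> (pr \<circ> Fu) ` A"
    then obtain u where y: "y = pr (Fu u)" by auto
    have "Fu u \<in> zspan m n gs" using Fu_spl assms by auto
    then obtain c where x: "Fu u = (\<lambda>v. if v < n then (\<Sum>k<length gs. c k * (gs ! k) v) mod m else 0)"
      unfolding zspan_def by auto
    define c' where "c' = restrict (\<lambda>k. c k mod p) {..<j}"
    have "c' \<in> B" unfolding c'_def B_def using p1 by auto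
    moreover have "y = H c'"
    proof
      fix v
      have "(\<Sum>k<j. c k * (gs ! k) v) mod p = (\<Sum>k<j. (c k * (gs ! k) v) mod p) mod p"
        by (simp add: mod_sum_eq)
      also have "\<dots> = (\<Sum>k<j. (c' k * (gs ! k) v) mod p) mod p"
        proof -
        have "(\<Sum>k<j. (c k * (gs ! k) v) mod p) = (\<Sum>k<j. (c' k * (gs ! k) v) mod p)"
          by (rule sum.cong) (simp_all add: c'_def mod_mult_left_eq)
        then show ?thesis by simp
      qed
      also have "\<dots> = (\<Sum>k<j. c' k * (gs ! k) v) mod p"
        by (simp add: mod_sum_eq)
      finally show "y v = H c' v" using y x assms(1)
        by (simp add: pr_def H_def mod_mod_cancel[OF pdm])
    qed
    ultimately show "y \<in> H ` B" by blast
  qed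
  have "nat p ^ i = card ((pr \<circ> Fu) ` A)" using card_image[OF inj_pr] cA A_def by simp
  also have "\<dots> \<le> card (H ` B)" using sub fB by (simp add: card_mono)
  also have "\<dots> \<le> card B" using fB card_image_le by blast
  finally have le: "nat p ^ i \<le> nat p ^ j" using cB by simp
  have g: "1 < nat p" using p1 by simp
  show ?thesis using power_le_imp_le_exp[OF g le] .
qed

lemma main: "\<exists>\<alpha>. edge_labeling_Kn m n \<alpha> \<and> spline_rank m n \<alpha> = i"
proof (rule exI[of _ al], rule conjI)
  show "edge_labeling_Kn m n al" by (rule labeling)
  show "spline_rank m n al = i"
    unfolding spline_rank_def
  proof (rule Least_equality)
    show "\<exists>gs. length gs = i \<and> set gs \<subseteq> splines_Kn m n al \<and> zspan m n gs = splines_Kn m n al"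
      using upper by blast
  next
    fix y assume "\<exists>gs. length gs = y \<and> set gs \<subseteq> splines_Kn m n al \<and> zspan m n gs = splines_Kn m n al"
    then obtain gs where "length gs = y" "zspan m n gs = splines_Kn m n al" by blast
    then show "i \<le> y" by (rule lower)
  qed
qed

end

theorem mainTheorem12:
  fixes p q m :: int and n i :: nat
  assumes "prime p" and "prime q" and "p \<noteq> q" and "m = p * q"
    and "2 \<le> n" and "2 \<le> i" and "i \<le> n"
  shows "\<exists>\<alpha>. edge_labeling_Kn m n \<alpha> \<and> spline_rank m n \<alpha> = i"
proof -
  interpret cfg p q m n i by (unfold_locales; fact assms)
  show ?thesis by (rule main)
qed

end
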